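(* Let $0<q<1$ and let $n$ and $s_1,\dots,s_n$ be positive integers such that $s_j>1$ for some $j$. Then \[ \sum_{j=1}^n \zeta\big[s_j+1,s_{j+1},\dots,s_n,s_1,\dots,s_{j-1}\big] = \sum_{j=1}^n \sum_{k=0}^{s_j-2}\zeta\big[s_j-k,s_{j+1},\dots,s_n,s_1,\dots,s_{j-1},k+1\big], \] where the inner sum on the right is zero when $s_j=1$.
   Context: Fix $0<q<1$. For real $x$, $[x]_q := (1-q^x)/(1-q)$. For positive integers $t_1,\dots,t_N$ with $t_1>1$, $\zeta[t_1,\dots,t_N] := \sum_{k_1>\cdots>k_N>0}\prod_{j=1}^N q^{(t_j-1)k_j}/[k_j]_q^{t_j}$ (sum over positive integers). *)

theory Defs
  imports "HOL-Analysis.Analysis"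
begin

definition qint :: "real \<Rightarrow> real \<Rightarrow> real" where
  "qint q x = (1 - q powr x) / (1 - q)"

definition qzeta_index :: "nat \<Rightarrow> nat list set" where
  "qzeta_index N = {ks. length ks = N \<and> sorted_wrt (>) ks \<and> (\<forall>k\<in>set ks. k > 0)}"

definition qzeta :: "real \<Rightarrow> nat list \<Rightarrow> real" where
  "qzeta q t = (\<Sum>\<^sub>\<infinity> ks \<in> qzeta_index (length t).
      \<Prod>j<length t. q ^ ((t ! j - 1) * ks ! j) / (qint q (real (ks ! j))) ^ (t ! j))"

end

theory Submission
  imports Defs
begin


definition w :: "real \<Rightarrow> nat \<Rightarrow> nat \<Rightarrow> real" where
  "w q t k = q ^ ((t - 1) * k) / (qint q (real k)) ^ t"
definition KK :: "real \<Rightarrow> nat \<Rightarrow> nat \<Rightarrow> real" where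
  "KK q a b = q ^ (a - b) / qint q (real (a - b))"
definition gg :: "real \<Rightarrow> nat \<Rightarrow> nat \<Rightarrow> real" where
  "gg q t b = q ^ (t * b) / (qint q (real b)) ^ t"

lemma qint_nat: "0 < q \<Longrightarrow> qint q (real k) = (1 - q ^ k) / (1 - q)"
  by (simp add: qint_def powr_realpow)

context fixes q :: real assumes q0: "0 < q" and q1: "q < 1"
begin

lemma qint_ge1: "k \<ge> 1 \<Longrightarrow> qint q (real k) \<ge> 1"
proof -
  assume "k \<ge> 1"
  then have "q ^ k \<le> q ^ 1" using q0 q1 by (intro power_decreasing) auto
  then show ?thesis using q0 q1 by (simp add: qint_nat field_simps)
qed

lemma qint_pos: "k \<ge> 1 \<Longrightarrow> qint q (real k) > 0"
  using qint_ge1 by fastforce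

lemma w_Suc: "t \<ge> 1 \<Longrightarrow> k \<ge> 1 \<Longrightarrow> w q (Suc t) k = (q ^ k / qint q (real k)) * w q t k"
proof -
  assume t: "t \<ge> 1" and k: "k \<ge> 1"
  have "(Suc t - 1) * k = k + (t - 1) * k" using t by (cases t) auto
  then show ?thesis using qint_pos[OF k] by (simp add: w_def power_add)
qed

lemma w_KK0: "t \<ge> 1 \<Longrightarrow> k \<ge> 1 \<Longrightarrow> w q (Suc t) k = w q t k * KK q k 0"
  using w_Suc by (simp add: KK_def)

lemma w1: "w q 1 k = 1 / qint q (real k)"
  by (simp add: w_def)

lemma gg_Suc: "gg q (Suc m) b = (q ^ b / qint q (real b)) * gg q m b"
  by (simp add: gg_def power_add mult.commute)

lemma w_gg: "w q (Suc m) b = gg q m b / qint q (real b)"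
  by (simp add: gg_def w_def)

lemma gg0[simp]: "gg q 0 b = 1" by (simp add: gg_def)

lemma KK_key:
  assumes "b \<ge> 1" "a > b"
  shows "KK q a b * (q ^ b / qint q (real b) - q ^ a / qint q (real a))
       = q ^ a / (qint q (real a) * qint q (real b))"
proof -
  obtain d where d: "a = b + d" "d \<ge> 1" using assms by (metis add_diff_inverse_nat less_imp_le_nat not_less_eq_eq not_less plus_1_eq_Suc le_add1 Suc_le_eq zero_less_diff)
  have X: "q ^ b < 1" "q ^ b > 0" using assms q0 q1 by (auto simp: power_less_one_iff)
  have Y: "q ^ d < 1" "q ^ d > 0" using d q0 q1 by (auto simp: power_less_one_iff)
  have XY: "q ^ b * q ^ d < 1" using q0 q1 d assms by (simp add: power_add[symmetric] power_less_one_iff)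
  have e1: "qint q (real (b + d)) = (1 - q^b * q^d) / (1 - q)" using q0 by (simp only: qint_nat power_add)
  have e2: "qint q (real (b + d - b)) = (1 - q^d) / (1 - q)" using q0 by (simp add: qint_nat)
  have e3: "qint q (real b) = (1 - q^b) / (1 - q)" using q0 by (simp add: qint_nat)
  have e4: "q ^ (b + d - b) = q ^ d" "q ^ (b + d) = q^b * q^d" by (simp_all add: power_add)
  have gen: "\<And>X Y. 0 < X \<Longrightarrow> X < 1 \<Longrightarrow> 0 < Y \<Longrightarrow> Y < 1 \<Longrightarrow> X * Y < 1 \<Longrightarrow>
     Y / ((1 - Y) / (1 - q)) * (X / ((1 - X) / (1 - q)) - X * Y / ((1 - X * Y) / (1 - q)))
     = X * Y / ((1 - X * Y) / (1 - q) * ((1 - X) / (1 - q)))"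
  proof -
    fix X Y :: real assume h: "0 < X" "X < 1" "0 < Y" "Y < 1" "X * Y < 1"
    then have n: "1 - X \<noteq> 0" "1 - Y \<noteq> 0" "1 - X * Y \<noteq> 0" "1 - q \<noteq> 0" using q1 by auto
    show "Y / ((1 - Y) / (1 - q)) * (X / ((1 - X) / (1 - q)) - X * Y / ((1 - X * Y) / (1 - q)))
     = X * Y / ((1 - X * Y) / (1 - q) * ((1 - X) / (1 - q)))"
    proof -
      have "X / ((1 - X) / (1 - q)) - X * Y / ((1 - X * Y) / (1 - q)) = (1-q) * X * (1 - Y) / ((1-X)*(1-X*Y))"
        using n by (simp add: divide_simps) (simp add: algebra_simps)
      then show ?thesis using n by (simp add: divide_simps)
    qed
  qed
  show ?thesis unfolding KK_def d(1) e1 e2 e3 e4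
    using gen[of "q^b" "q^d"] X Y XY by simp
qed

lemma key1:
  assumes "b \<ge> 1" "a > b"
  shows "w q 1 a * KK q a b * gg q m b
       = w q (Suc m) a * KK q a b + (\<Sum>k<m. w q (Suc m - k) a * w q (k+1) b)"
proof (induction m)
  case 0 then show ?case by simp
next
  case (Suc m)
  have a1: "a \<ge> 1" using assms by simp
  define al where "al = q ^ a / qint q (real a)"
  have s: "(\<Sum>k<Suc m. w q (Suc (Suc m) - k) a * w q (k+1) b)
      = al * (\<Sum>k<m. w q (Suc m - k) a * w q (k+1) b) + w q 2 a * w q (Suc m) b"
  proof -
    have "(\<Sum>k<m. w q (Suc (Suc m) - k) a * w q (k+1) b) = (\<Sum>k<m. al * (w q (Suc m - k) a * w q (k+1) b))"
    proof (rule sum.cong)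
      fix k assume "k \<in> {..<m}"
      then have "Suc (Suc m) - k = Suc (Suc m - k)" "Suc m - k \<ge> 1" by auto
      then show "w q (Suc (Suc m) - k) a * w q (k+1) b = al * (w q (Suc m - k) a * w q (k+1) b)"
        using w_Suc[of "Suc m - k" a] a1 unfolding al_def by simp
    qed simp
    then show ?thesis by (simp add: sum_distrib_left)
  qed
  have k: "KK q a b * (q ^ b / qint q (real b) - al) = al / qint q (real b)"
    using KK_key[OF assms] unfolding al_def by simp
  have "w q 1 a * KK q a b * gg q (Suc m) b
     = al * (w q 1 a * KK q a b * gg q m b) + w q 2 a * w q (Suc m) b"
  proof -
    have w2: "w q 2 a = al * w q 1 a" using w_Suc[of 1 a] a1 by (simp add: al_def numeral_2_eq_2)
    have "(KK q a b * (q ^ b / qint q (real b) - al)) * (gg q m b * w q 1 a) = (al / qint q (real b)) * (gg q m b * w q 1 a)"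
      using k by simp
    then show ?thesis unfolding gg_Suc w2 w_gg
      by (simp add: algebra_simps)
  qed
  also have "\<dots> = w q (Suc (Suc m)) a * KK q a b + (\<Sum>k<Suc m. w q (Suc (Suc m) - k) a * w q (k+1) b)"
  proof -
    have "w q (Suc (Suc m)) a = al * w q (Suc m) a" using w_Suc[of "Suc m" a] a1 by (simp add: al_def)
    then show ?thesis unfolding s Suc by (simp add: algebra_simps)
  qed
  finally show ?case .
qed


lemma qint_nonneg: "qint q (real k) \<ge> 0"
  using q0 q1 by (simp add: qint_nat power_le_one)

lemma w_nonneg: "w q t k \<ge> 0"
  using q0 qint_nonneg by (simp add: w_def)

lemma KK_nonneg: "KK q a b \<ge> 0"
  using q0 qint_nonneg by (simp add: KK_def)

lemma gg_nonneg: "gg q t b \<ge> 0"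
  using q0 qint_nonneg by (simp add: gg_def)

lemma KK_le: "a > b \<Longrightarrow> KK q a b \<le> q ^ (a - b)"
proof -
  assume "a > b"
  then have "qint q (real (a - b)) \<ge> 1" by (intro qint_ge1) simp
  then show ?thesis using q0 by (simp add: KK_def divide_le_eq)
qed

lemma w_le1: "k \<ge> 1 \<Longrightarrow> w q t k \<le> 1"
proof -
  assume k: "k \<ge> 1"
  have "q ^ ((t - 1) * k) \<le> 1" using q0 q1 by (simp add: power_le_one)
  moreover have "1 \<le> qint q (real k) ^ t" using qint_ge1[OF k] by (simp add: one_le_power)
  ultimately show ?thesis using q0 by (simp add: w_def divide_le_eq)
qed

lemma w_le_q: "k \<ge> 1 \<Longrightarrow> t \<ge> 2 \<Longrightarrow> w q t k \<le> q ^ k"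
proof -
  assume k: "k \<ge> 1" and t: "t \<ge> 2"
  have "q ^ ((t - 1) * k) \<le> q ^ k" using q0 q1 t by (intro power_decreasing) auto
  moreover have "1 \<le> qint q (real k) ^ t" using qint_ge1[OF k] by (simp add: one_le_power)
  ultimately show ?thesis using q0
  proof -
    have "q ^ ((t - 1) * k) / qint q (real k) ^ t \<le> q ^ ((t - 1) * k)"
      using \<open>1 \<le> qint q (real k) ^ t\<close> q0 by (simp add: divide_le_eq mult_le_cancel_left1)
    then show ?thesis unfolding w_def using \<open>q ^ ((t - 1) * k) \<le> q ^ k\<close> by linarith
  qed
qed

lemma KK_tendsto: "(\<lambda>n. KK q (n + c) 0) \<longlonglongrightarrow> 0"
proof (rule Lim_null_comparison)
  show "\<forall>\<^sub>F n in sequentially. norm (KK q (n + c) 0) \<le> q ^ n"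
  proof (rule eventually_sequentiallyI[of 1])
    fix n :: nat assume "n \<ge> 1"
    then have "KK q (n + c) 0 \<le> q ^ (n + c)" using KK_le[of 0 "n + c"] by simp
    also have "\<dots> \<le> q ^ n" using q0 q1 by (intro power_decreasing) auto
    finally show "norm (KK q (n + c) 0) \<le> q ^ n" using KK_nonneg by simp
  qed
  show "(\<lambda>n. q ^ n) \<longlonglongrightarrow> 0" using q0 q1 by (intro LIMSEQ_power_zero) auto
qed

lemma term_split:
  assumes "b \<ge> 1" "a > b"
  shows "w q 1 a * KK q a b = w q 1 b * (KK q (a - b) 0 - KK q a 0)"
proof -
  obtain d where d: "a = b + d" "d \<ge> 1" using assms
    by (metis add_diff_inverse_nat less_imp_le_nat not_less_eq_eq not_less plus_1_eq_Suc le_add1 Suc_le_eq zero_less_diff)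
  have X: "q ^ b < 1" "q ^ b > 0" using assms q0 q1 by (auto simp: power_less_one_iff)
  have Y: "q ^ d < 1" "q ^ d > 0" using d q0 q1 by (auto simp: power_less_one_iff)
  have XY: "q ^ b * q ^ d < 1" using q0 q1 d assms by (simp add: power_add[symmetric] power_less_one_iff)
  have e1: "qint q (real (b + d)) = (1 - q^b * q^d) / (1 - q)" using q0 by (simp only: qint_nat power_add)
  have e2: "qint q (real (b + d - b)) = (1 - q^d) / (1 - q)" using q0 by (simp add: qint_nat)
  have e3: "qint q (real b) = (1 - q^b) / (1 - q)" using q0 by (simp add: qint_nat)
  have e4: "q ^ (b + d - b) = q ^ d" "q ^ (b + d) = q^b * q^d" "b + d - 0 = b + d" by (simp_all add: power_add)
  have gen: "1 / ((1 - X * Y) / (1 - q)) * (Y / ((1 - Y) / (1 - q)))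
     = 1 / ((1 - X) / (1 - q)) * (Y / ((1 - Y) / (1 - q)) - X * Y / ((1 - X * Y) / (1 - q)))"
    if h: "0 < X" "X < 1" "0 < Y" "Y < 1" "X * Y < 1" for X Y :: real
  proof -
    have n: "1 - X \<noteq> 0" "1 - Y \<noteq> 0" "1 - X * Y \<noteq> 0" "1 - q \<noteq> 0" using h q1 by auto
    have "Y / ((1 - Y) / (1 - q)) - X * Y / ((1 - X * Y) / (1 - q)) = (1-q) * Y * (1 - X) / ((1-Y)*(1-X*Y))"
      using n by (simp add: divide_simps) (simp add: algebra_simps)
    then show ?thesis using n by (simp add: divide_simps)
  qed
  have e5: "b + d - b = d" by simp
  have e6: "d - 0 = d" "qint q (real d) = (1 - q^d) / (1 - q)" using q0 by (simp_all add: qint_nat)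
  show ?thesis unfolding KK_def w1 d(1) e5 e4 e6 e1 e3
    by (rule gen[of "q^b" "q^d"]) (use X Y XY in auto)
qed

lemma key2:
  assumes b: "b \<ge> 1" and mb: "m \<ge> b"
  shows "((\<lambda>a. w q 1 a * KK q a b) has_sum (w q 1 b * (\<Sum>b'<b. KK q m b'))) {m<..}"
proof -
  define d0 where "d0 = m - b"
  define f where "f t = KK q (t + (d0 + 1)) 0" for t
  have tel: "(\<lambda>t. f (t + i) - f (Suc (t + i))) sums (f i)" for i
  proof -
    have "(\<lambda>t. f (t + i)) \<longlonglongrightarrow> 0" unfolding f_def
      using KK_tendsto[of "i + (d0 + 1)"] by (simp add: add.assoc)
    from telescope_sums'[OF this] show ?thesis by (simp add: f_def)
  qed
  have "(\<lambda>t. \<Sum>i<b. f (t + i) - f (Suc (t + i))) sums (\<Sum>i<b. f i)"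
    by (rule sums_sum) (rule tel)
  moreover have "(\<Sum>i<b. f (t + i) - f (Suc (t + i))) = f t - f (t + b)" for t
    using sum_lessThan_telescope'[of "\<lambda>i. f (t + i)" b] by simp
  ultimately have s1: "(\<lambda>t. f t - f (t + b)) sums (\<Sum>i<b. f i)" by simp
  have s2: "(\<Sum>i<b. f i) = (\<Sum>b'<b. KK q m b')"
  proof -
    have "(\<Sum>b'<b. KK q m b') = (\<Sum>b'<b. f (b - Suc b'))"
    proof (rule sum.cong)
      fix b' assume "b' \<in> {..<b}"
      then have "b - Suc b' + (d0 + 1) = m - b'" using mb unfolding d0_def by auto
      then show "KK q m b' = f (b - Suc b')" unfolding f_def KK_def by simp
    qed simp
    also have "\<dots> = (\<Sum>i<b. f i)" by (rule sum.nat_diff_reindex)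
    finally show ?thesis by simp
  qed
  have s3: "w q 1 (t + m + 1) * KK q (t + m + 1) b = w q 1 b * (f t - f (t + b))" for t
  proof -
    have "t + m + 1 - b = t + (d0 + 1)" "t + b + (d0 + 1) = t + m + 1" using mb unfolding d0_def by auto
    have ts: "w q 1 (t + m + 1) * KK q (t + m + 1) b = w q 1 b * (KK q (t + m + 1 - b) 0 - KK q (t + m + 1) 0)"
      by (rule term_split) (use mb b in auto)
    show ?thesis unfolding f_def by (simp only: ts \<open>t + m + 1 - b = t + (d0 + 1)\<close> \<open>t + b + (d0 + 1) = t + m + 1\<close>)
  qed
  have "(\<lambda>t. w q 1 (t + m + 1) * KK q (t + m + 1) b) sums (w q 1 b * (\<Sum>b'<b. KK q m b'))"
    unfolding s3 s2[symmetric] by (rule sums_mult[OF s1])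
  then have h: "((\<lambda>t. w q 1 (t + m + 1) * KK q (t + m + 1) b) has_sum (w q 1 b * (\<Sum>b'<b. KK q m b'))) UNIV"
    by (rule sums_nonneg_imp_has_sum) (simp add: w_nonneg KK_nonneg)
  have bij: "bij_betw (\<lambda>t. t + m + 1) UNIV {m<..}"
    by (rule bij_betwI[where g="\<lambda>a. a - m - 1"]) auto
  show ?thesis using h has_sum_reindex_bij_betw[OF bij, of "\<lambda>a. w q 1 a * KK q a b"] by simp
qed

end


definition WW :: "real \<Rightarrow> nat list \<Rightarrow> nat list \<Rightarrow> real" where
  "WW q t ks = (\<Prod>j<length t. w q (t!j) (ks!j))"

lemma qzeta_WW: "qzeta q t = infsum (WW q t) (qzeta_index (length t))"
  by (simp add: qzeta_def WW_def[abs_def] w_def)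

lemma WW_Cons: "WW q (x # t) (a # c) = w q x a * WW q t c"
  unfolding WW_def by (simp only: length_Cons prod.lessThan_Suc_shift) simp

lemma WW_snoc: "length t \<le> length c \<Longrightarrow> WW q t (c @ [b]) = WW q t c"
  unfolding WW_def by (intro prod.cong) (auto simp: nth_append)

lemma WW_app1: "length t = length c \<Longrightarrow> WW q (t @ [x]) (c @ [b]) = WW q t c * w q x b"
  unfolding WW_def by (simp add: nth_append WW_snoc)

lemma idx_iff: "ks \<in> qzeta_index N \<longleftrightarrow> length ks = N \<and> sorted_wrt (>) ks \<and> (\<forall>k\<in>set ks. k > 0)"
  by (simp add: qzeta_index_def)

lemma idx_nth_less: "ks \<in> qzeta_index N \<Longrightarrow> i < j \<Longrightarrow> j < N \<Longrightarrow> ks ! j < ks ! i"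
  by (auto simp: idx_iff sorted_wrt_iff_nth_less)

lemma idx_nth_le: "ks \<in> qzeta_index N \<Longrightarrow> i \<le> j \<Longrightarrow> j < N \<Longrightarrow> ks ! j \<le> ks ! i"
  using idx_nth_less[of ks N i j] by (cases "i = j") auto

lemma idx_pos: "ks \<in> qzeta_index N \<Longrightarrow> i < N \<Longrightarrow> ks ! i \<ge> 1"
  by (auto simp: idx_iff Suc_le_eq)

lemma idx_hd: "ks \<in> qzeta_index N \<Longrightarrow> N \<ge> 1 \<Longrightarrow> hd ks = ks ! 0"
  by (cases ks) (auto simp: idx_iff)

lemma idx_last: "ks \<in> qzeta_index N \<Longrightarrow> N \<ge> 1 \<Longrightarrow> last ks = ks ! (N - 1)"
  by (cases ks rule: rev_cases) (auto simp: idx_iff nth_append)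

lemma bij_first:
  assumes "n \<ge> 1"
  shows "bij_betw (\<lambda>(c, a). a # c) (Sigma (qzeta_index n) (\<lambda>c. {hd c<..})) (qzeta_index (Suc n))"
proof (rule bij_betwI[where g = "\<lambda>ks. (tl ks, hd ks)"])
  show "(\<lambda>(c, a). a # c) \<in> Sigma (qzeta_index n) (\<lambda>c. {hd c<..}) \<rightarrow> qzeta_index (Suc n)"
  proof
    fix x assume "x \<in> Sigma (qzeta_index n) (\<lambda>c. {hd c<..})"
    then obtain c a where x: "x = (c, a)" "c \<in> qzeta_index n" "a > hd c" by auto
    have "\<forall>y\<in>set c. y < a"
    proof
      fix y assume "y \<in> set c"
      then obtain i where i: "i < n" "c ! i = y" using x(2) by (auto simp: idx_iff in_set_conv_nth)
      then have "y \<le> c ! 0" using idx_nth_le[OF x(2), of 0 i] by simp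
      then show "y < a" using x(3) idx_hd[OF x(2) assms] by simp
    qed
    then show "(case x of (c, a) \<Rightarrow> a # c) \<in> qzeta_index (Suc n)"
      using x by (auto simp: idx_iff)
  qed
  show "(\<lambda>ks. (tl ks, hd ks)) \<in> qzeta_index (Suc n) \<rightarrow> Sigma (qzeta_index n) (\<lambda>c. {hd c<..})"
  proof
    fix ks assume ks: "ks \<in> qzeta_index (Suc n)"
    then obtain a c where kc: "ks = a # c" by (cases ks) (auto simp: idx_iff)
    then have c: "c \<in> qzeta_index n" using ks by (auto simp: idx_iff)
    have "c \<noteq> []" using c assms by (auto simp: idx_iff)
    then have "hd c < a" using ks kc by (auto simp: idx_iff)
    then show "(tl ks, hd ks) \<in> Sigma (qzeta_index n) (\<lambda>c. {hd c<..})" using c kc by auto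
  qed
  show "\<And>x. x \<in> Sigma (qzeta_index n) (\<lambda>c. {hd c<..}) \<Longrightarrow> (tl (case x of (c, a) \<Rightarrow> a # c), hd (case x of (c, a) \<Rightarrow> a # c)) = x"
    by auto
  show "\<And>y. y \<in> qzeta_index (Suc n) \<Longrightarrow> (case (tl y, hd y) of (c, a) \<Rightarrow> a # c) = y"
    by (auto simp: idx_iff) (metis list.exhaust_sel list.size(3) nat.simps(3))
qed

lemma bij_last:
  assumes "n \<ge> 1"
  shows "bij_betw (\<lambda>(c, b). c @ [b]) (Sigma (qzeta_index n) (\<lambda>c. {0<..<last c})) (qzeta_index (Suc n))"
proof (rule bij_betwI[where g = "\<lambda>ks. (butlast ks, last ks)"])
  show "(\<lambda>(c, b). c @ [b]) \<in> Sigma (qzeta_index n) (\<lambda>c. {0<..<last c}) \<rightarrow> qzeta_index (Suc n)"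
  proof
    fix x assume "x \<in> Sigma (qzeta_index n) (\<lambda>c. {0<..<last c})"
    then obtain c b where x: "x = (c, b)" "c \<in> qzeta_index n" "b < last c" "b > 0" by auto
    have "\<forall>y\<in>set c. b < y"
    proof
      fix y assume "y \<in> set c"
      then obtain i where i: "i < n" "c ! i = y" using x(2) by (auto simp: idx_iff in_set_conv_nth)
      then have "c ! (n - 1) \<le> y" using idx_nth_le[OF x(2), of i "n - 1"] by simp
      then show "b < y" using x(3) idx_last[OF x(2) assms] by simp
    qed
    then show "(case x of (c, b) \<Rightarrow> c @ [b]) \<in> qzeta_index (Suc n)"
      using x by (auto simp: idx_iff sorted_wrt_append)
  qed
  show "(\<lambda>ks. (butlast ks, last ks)) \<in> qzeta_index (Suc n) \<rightarrow> Sigma (qzeta_index n) (\<lambda>c. {0<..<last c})"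
  proof
    fix ks assume ks: "ks \<in> qzeta_index (Suc n)"
    then have ne: "ks \<noteq> []" by (auto simp: idx_iff)
    define c where "c = butlast ks"
    define b where "b = last ks"
    have kc: "ks = c @ [b]" using ne by (simp add: c_def b_def)
    then have c: "c \<in> qzeta_index n" using ks by (auto simp: idx_iff sorted_wrt_append)
    have "c \<noteq> []" using c assms by (auto simp: idx_iff)
    then have "b < last c" "b > 0" using ks kc by (auto simp: idx_iff sorted_wrt_append)
    then show "(butlast ks, last ks) \<in> Sigma (qzeta_index n) (\<lambda>c. {0<..<last c})"
      using c unfolding c_def b_def by auto
  qed
  show "\<And>x. x \<in> Sigma (qzeta_index n) (\<lambda>c. {0<..<last c}) \<Longrightarrow> (butlast (case x of (c, b) \<Rightarrow> c @ [b]), last (case x of (c, b) \<Rightarrow> c @ [b])) = x"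
    by auto
  show "(case (butlast y, last y) of (c, b) \<Rightarrow> c @ [b]) = y" if "y \<in> qzeta_index (Suc n)" for y
  proof -
    have "y \<noteq> []" using that by (auto simp: idx_iff)
    then show ?thesis by simp
  qed
qed

lemma lists_summable:
  fixes r :: real
  assumes r: "0 < r" "r < 1"
  shows "(\<lambda>ks. r ^ sum_list ks) summable_on {ks :: nat list. length ks = N}"
proof (induction N)
  case 0
  have "{ks :: nat list. length ks = 0} = {[]}" by auto
  then show ?case by simp
next
  case (Suc N)
  let ?A = "{ks :: nat list. length ks = N}"
  define S where "S = infsum (\<lambda>ks. r ^ sum_list ks) ?A"
  have img: "{ks :: nat list. length ks = Suc N} = (\<lambda>(x, xs). x # xs) ` (UNIV \<times> ?A)"
  proof (rule set_eqI, rule iffI)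
    fix ks :: "nat list" assume "ks \<in> {ks. length ks = Suc N}"
    then obtain x xs where "ks = x # xs" "length xs = N" by (cases ks) auto
    then show "ks \<in> (\<lambda>(x, xs). x # xs) ` (UNIV \<times> ?A)" by force
  qed auto
  have inj: "inj_on (\<lambda>(x, xs). x # xs) (UNIV \<times> ?A)" by (auto simp: inj_on_def)
  have "(\<lambda>(x, xs). r ^ x * r ^ sum_list xs) summable_on Sigma UNIV (\<lambda>_. ?A)"
  proof (rule summable_on_SigmaI)
    show "((\<lambda>xs. case (x, xs) of (x, xs) \<Rightarrow> r ^ x * r ^ sum_list xs) has_sum (r ^ x * S)) ?A" for x
      using has_sum_cmult_right[OF Suc[unfolded summable_iff_has_sum_infsum], of "r ^ x"]
      unfolding S_def by simp
    have "summable (\<lambda>x. r ^ x)" using r by (intro summable_geometric) simp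
    then have "(\<lambda>x. r ^ x) summable_on UNIV" using r by (intro summable_nonneg_imp_summable_on) auto
    then show "(\<lambda>x. r ^ x * S) summable_on UNIV" by (rule summable_on_cmult_left)
    show "\<And>x y. 0 \<le> (case (x, y) of (x, xs) \<Rightarrow> r ^ x * r ^ sum_list xs)" using r by simp
  qed
  then have "(\<lambda>ks. r ^ sum_list ks) summable_on ((\<lambda>(x, xs). x # xs) ` (UNIV \<times> ?A))"
    by (subst summable_on_reindex[OF inj]) (simp add: o_def case_prod_unfold power_add)
  then show ?case using img by simp
qed

context fixes q :: real assumes q0: "0 < q" and q1: "q < 1"
begin

lemma hd_summable:
  assumes N: "N \<ge> 1"
  shows "(\<lambda>ks. q ^ hd ks) summable_on qzeta_index N"
proof -
  define r where "r = root N q"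
  have r: "0 < r" "r < 1" using q0 q1 N by (auto simp: r_def real_root_lt_1_iff)
  have rN: "r ^ N = q" using q0 N by (simp add: r_def)
  have s: "(\<lambda>ks. r ^ sum_list ks) summable_on qzeta_index N"
    by (rule summable_on_subset_banach[OF lists_summable[OF r]]) (auto simp: idx_iff)
  show ?thesis
  proof (rule summable_on_comparison_test[OF s])
    fix ks assume ks: "ks \<in> qzeta_index N"
    have "sum_list ks = (\<Sum>i<N. ks ! i)" using ks by (simp add: idx_iff sum_list_sum_nth atLeast0LessThan)
    also have "\<dots> \<le> (\<Sum>i<N. ks ! 0)" by (intro sum_mono idx_nth_le[OF ks]) auto
    also have "\<dots> = N * hd ks" using idx_hd[OF ks N] by simp
    finally have "r ^ (N * hd ks) \<le> r ^ sum_list ks" using r by (intro power_decreasing) auto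
    then show "q ^ hd ks \<le> r ^ sum_list ks" by (simp add: power_mult rN)
    show "0 \<le> q ^ hd ks" using q0 by simp
  qed
qed

lemma WW_nonneg: "WW q t ks \<ge> 0"
  unfolding WW_def using w_nonneg[OF q0 q1] by (simp add: prod_nonneg)

lemma WW_le_q:
  assumes ks: "ks \<in> qzeta_index N" and lt: "length t \<le> N" and i: "i < length t" and ti: "t ! i \<ge> 2"
  shows "WW q t ks \<le> q ^ (ks ! i)"
proof -
  have "WW q t ks = w q (t!i) (ks!i) * (\<Prod>j\<in>{..<length t} - {i}. w q (t!j) (ks!j))"
    unfolding WW_def using i by (subst prod.remove[of _ i]) auto
  also have "\<dots> \<le> q ^ (ks ! i) * 1"
  proof (rule mult_mono)
    show "w q (t ! i) (ks ! i) \<le> q ^ ks ! i" using w_le_q[OF q0 q1 idx_pos[OF ks] ti] i lt by simp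
    show "(\<Prod>j\<in>{..<length t} - {i}. w q (t ! j) (ks ! j)) \<le> 1"
      using w_le1[OF q0 q1 idx_pos[OF ks]] w_nonneg[OF q0 q1] lt by (intro prod_le_1) auto
    show "0 \<le> q ^ ks ! i" using q0 by simp
    show "0 \<le> (\<Prod>j\<in>{..<length t} - {i}. w q (t ! j) (ks ! j))"
      using w_nonneg[OF q0 q1] by (intro prod_nonneg) auto
  qed
  finally show ?thesis by simp
qed

end


definition Uf where "Uf q s j ks = WW q (rotate j s) ks * KK q (hd ks) (last ks)"
definition Vf where "Vf q s j ks = WW q (1 # tl (rotate j s)) ks * KK q (hd ks) (last ks) * gg q (s!j - 1) (last ks)"
definition Rf where "Rf q s j k ks = WW q ((s!j - k) # tl (rotate j s) @ [k+1]) ks"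
definition Lf where "Lf q s j ks = WW q ((s!j + 1) # tl (rotate j s)) ks"

lemma has_sum_sum_fin:
  fixes f :: "'i \<Rightarrow> 'a \<Rightarrow> real"
  assumes "finite I" "\<And>i. i \<in> I \<Longrightarrow> (f i has_sum S i) A"
  shows "((\<lambda>x. \<Sum>i\<in>I. f i x) has_sum (\<Sum>i\<in>I. S i)) A"
  using assms
proof (induction I rule: finite_induct)
  case empty then show ?case by simp
next
  case (insert i I)
  then show ?case by (simp add: has_sum_add)
qed

context fixes q :: real and s :: "nat list"
  assumes q0: "0 < q" and q1: "q < 1" and npos: "length s > 0"
    and spos: "\<forall>x\<in>set s. x > 0" and sbig: "\<exists>x\<in>set s. x > 1"
begin

lemma rot_ne: "rotate j s \<noteq> []" using npos by auto

lemma rot_cons: "j < length s \<Longrightarrow> rotate j s = s ! j # tl (rotate j s)"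
proof -
  assume j: "j < length s"
  have "hd (rotate j s) = s ! j" using hd_rotate_conv_nth[of s j] npos j by auto
  moreover have "rotate j s = hd (rotate j s) # tl (rotate j s)" using rot_ne by simp
  ultimately show ?thesis by simp
qed

lemma len_tl: "length (tl (rotate j s)) = length s - 1" by simp

lemma rot_suc: "j < length s \<Longrightarrow> rotate (Suc j mod length s) s = tl (rotate j s) @ [s ! j]"
proof -
  assume j: "j < length s"
  have "rotate (Suc j mod length s) s = rotate (Suc j) s" by (rule rotate_conv_mod[symmetric])
  also have "\<dots> = rotate1 (rotate j s)" by simp
  also have "\<dots> = tl (rotate j s) @ [s ! j]"
  proof -
    define xs where "xs = tl (rotate j s)"
    have h: "rotate j s = s ! j # xs" unfolding xs_def by (rule rot_cons[OF j])
    show ?thesis unfolding xs_def[symmetric] h by simp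
  qed
  finally show ?thesis .
qed

lemma s_ge1: "j < length s \<Longrightarrow> s ! j \<ge> 1"
  using spos by (auto simp: Suc_le_eq)

lemma rot_big: "\<exists>i < length s. rotate j s ! i \<ge> 2"
proof -
  obtain x where "x \<in> set (rotate j s)" "x > 1" using sbig by auto
  then obtain i where "i < length (rotate j s)" "rotate j s ! i = x" unfolding in_set_conv_nth by blast
  then show ?thesis using \<open>x > 1\<close> by (intro exI[of _ i]) auto
qed

lemma S_L: "j < length s \<Longrightarrow> Lf q s j summable_on qzeta_index (length s)"
proof -
  assume j: "j < length s"
  show ?thesis
  proof (rule summable_on_comparison_test[OF hd_summable[OF q0 q1]])
    show "1 \<le> length s" using npos by (simp add: Suc_le_eq)
    fix ks assume ks: "ks \<in> qzeta_index (length s)"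
    have "Lf q s j ks \<le> q ^ (ks ! 0)" unfolding Lf_def
      by (rule WW_le_q[OF q0 q1 ks]) (use npos s_ge1[OF j] in auto)
    then show "Lf q s j ks \<le> q ^ hd ks" using idx_hd[OF ks] npos by simp
    show "0 \<le> Lf q s j ks" unfolding Lf_def by (rule WW_nonneg[OF q0 q1])
  qed
qed

lemma S_R: "j < length s \<Longrightarrow> k < s ! j - 1 \<Longrightarrow> Rf q s j k summable_on qzeta_index (Suc (length s))"
proof -
  assume j: "j < length s" and k: "k < s ! j - 1"
  show ?thesis
  proof (rule summable_on_comparison_test[OF hd_summable[OF q0 q1]])
    show "1 \<le> Suc (length s)" by simp
    fix ks assume ks: "ks \<in> qzeta_index (Suc (length s))"
    have "Rf q s j k ks \<le> q ^ (ks ! 0)" unfolding Rf_def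
      by (rule WW_le_q[OF q0 q1 ks]) (use npos k in auto)
    then show "Rf q s j k ks \<le> q ^ hd ks" using idx_hd[OF ks] by simp
    show "0 \<le> Rf q s j k ks" unfolding Rf_def by (rule WW_nonneg[OF q0 q1])
  qed
qed

lemma S_U: "Uf q s j summable_on qzeta_index (Suc (length s))"
proof (rule summable_on_comparison_test[OF hd_summable[OF q0 q1]])
  show "1 \<le> Suc (length s)" by simp
  fix ks assume ks: "ks \<in> qzeta_index (Suc (length s))"
  obtain i where i: "i < length s" "rotate j s ! i \<ge> 2" using rot_big by blast
  let ?n = "length s"
  have hl: "hd ks = ks ! 0" "last ks = ks ! ?n" using idx_hd[OF ks] idx_last[OF ks] by auto
  have o1: "ks ! ?n < ks ! 0" using idx_nth_less[OF ks, of 0 ?n] npos by simp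
  have o2: "ks ! ?n \<le> ks ! i" "ks ! i \<le> ks ! 0" using idx_nth_le[OF ks] i by auto
  have a: "WW q (rotate j s) ks \<le> q ^ (ks ! i)"
    by (rule WW_le_q[OF q0 q1 ks]) (use i in auto)
  have b: "KK q (hd ks) (last ks) \<le> q ^ (ks ! 0 - ks ! i)"
  proof -
    have "KK q (hd ks) (last ks) \<le> q ^ (ks ! 0 - ks ! ?n)" using KK_le[OF q0 q1 o1] hl by simp
    also have "\<dots> \<le> q ^ (ks ! 0 - ks ! i)" using q0 q1 o2 by (intro power_decreasing) auto
    finally show ?thesis .
  qed
  have "Uf q s j ks \<le> q ^ (ks ! i) * q ^ (ks ! 0 - ks ! i)" unfolding Uf_def
    by (rule mult_mono[OF a b]) (use q0 KK_nonneg[OF q0 q1] in auto)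
  also have "\<dots> = q ^ hd ks" using o2 hl by (simp add: power_add[symmetric])
  finally show "Uf q s j ks \<le> q ^ hd ks" .
  show "0 \<le> Uf q s j ks" unfolding Uf_def
    using WW_nonneg[OF q0 q1] KK_nonneg[OF q0 q1] by simp
qed

lemma P1:
  assumes j: "j < length s" and ks: "ks \<in> qzeta_index (Suc (length s))"
  shows "Vf q s j ks = Uf q s j ks + (\<Sum>k<s ! j - 1. Rf q s j k ks)"
proof -
  let ?n = "length s"
  let ?mid = "tl (rotate j s)"
  obtain a c where kc: "ks = a # c" using ks by (cases ks) (auto simp: idx_iff)
  have lc: "length c = ?n" using ks kc by (auto simp: idx_iff)
  then have cne: "c \<noteq> []" using npos by auto
  define b where "b = last c"
  define c' where "c' = butlast c"
  have cc: "c = c' @ [b]" using cne by (simp add: b_def c'_def)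
  have lc': "length c' = length ?mid" using lc cc by simp
  have hl: "hd ks = a" "last ks = b" using kc cne by (auto simp: b_def)
  have ab: "b < a" "b \<ge> 1"
  proof -
    have "last ks = ks ! ?n" "hd ks = ks ! 0" using idx_hd[OF ks] idx_last[OF ks] by auto
    moreover have "ks ! ?n < ks ! 0" using idx_nth_less[OF ks, of 0 ?n] npos by simp
    moreover have "ks ! ?n \<ge> 1" using idx_pos[OF ks] by simp
    ultimately show "b < a" "b \<ge> 1" using hl by auto
  qed
  define M where "M = WW q ?mid c'"
  have WWc: "WW q ?mid c = M" unfolding M_def cc by (rule WW_snoc) (simp add: lc')
  have eV: "Vf q s j ks = w q 1 a * KK q a b * gg q (s ! j - 1) b * M"
    unfolding Vf_def hl unfolding kc WW_Cons WWc by simp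
  have eU: "Uf q s j ks = w q (s ! j) a * KK q a b * M"
    unfolding Uf_def hl by (subst rot_cons[OF j]) (simp add: kc WW_Cons WWc)
  have eR: "Rf q s j k ks = w q (s ! j - k) a * w q (k + 1) b * M" for k
    unfolding Rf_def kc WW_Cons cc WW_app1[OF lc'[symmetric]] M_def by simp
  have sj: "Suc (s ! j - 1) = s ! j" using s_ge1[OF j] by simp
  have "w q 1 a * KK q a b * gg q (s ! j - 1) b
      = w q (s ! j) a * KK q a b + (\<Sum>k<s ! j - 1. w q (s ! j - k) a * w q (k+1) b)"
    using key1[OF q0 q1 ab(2) ab(1), of "s ! j - 1"] unfolding sj .
  then show ?thesis unfolding eV eU eR by (simp add: algebra_simps sum_distrib_left)
qed

lemma S_V: "j < length s \<Longrightarrow> Vf q s j summable_on qzeta_index (Suc (length s))"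
proof -
  assume j: "j < length s"
  let ?A = "qzeta_index (Suc (length s))"
  have h1: "(Uf q s j has_sum infsum (Uf q s j) ?A) ?A" using S_U by (simp add: summable_iff_has_sum_infsum)
  have h2: "((\<lambda>ks. \<Sum>k<s ! j - 1. Rf q s j k ks) has_sum (\<Sum>k<s ! j - 1. infsum (Rf q s j k) ?A)) ?A"
  proof (rule has_sum_sum_fin)
    show "finite {..<s ! j - 1}" by simp
    fix k assume "k \<in> {..<s ! j - 1}"
    then have "Rf q s j k summable_on ?A" using S_R[OF j] by simp
    then show "(Rf q s j k has_sum infsum (Rf q s j k) ?A) ?A" by (simp add: summable_iff_has_sum_infsum)
  qed
  note h3 = has_sum_add[OF h1 h2]
  have "(Vf q s j has_sum (infsum (Uf q s j) ?A + (\<Sum>k<s ! j - 1. infsum (Rf q s j k) ?A))) ?A"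
    using h3 by (rule has_sum_cong[THEN iffD1, rotated]) (simp add: P1[OF j])
  then show ?thesis by (rule has_sum_imp_summable)
qed


lemma P2:
  assumes j: "j < length s"
  defines "j' \<equiv> Suc j mod length s"
  shows "infsum (Vf q s j) (qzeta_index (Suc (length s)))
       = infsum (Lf q s j') (qzeta_index (length s)) + infsum (Uf q s j') (qzeta_index (Suc (length s)))"
proof -
  let ?n = "length s"
  let ?mid = "tl (rotate j s)"
  let ?r = "rotate j' s"
  have n1: "?n \<ge> 1" using npos by (simp add: Suc_le_eq)
  have j'n: "j' < ?n" unfolding j'_def using npos by simp
  have rr: "?r = ?mid @ [s ! j]" unfolding j'_def by (rule rot_suc[OF j])
  have rr': "?r = s ! j' # tl ?r" by (rule rot_cons[OF j'n])
  define V where "V = infsum (Vf q s j) (qzeta_index (Suc ?n))"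
  define L where "L = infsum (Lf q s j') (qzeta_index ?n)"
  define U where "U = infsum (Uf q s j') (qzeta_index (Suc ?n))"
  define G where "G c = WW q ?r c * (\<Sum>b'<last c. KK q (hd c) b')" for c
  define H where "H c = (\<Sum>b'\<in>{0<..<last c}. WW q ?r c * KK q (hd c) b')" for c
  have cfacts: "c \<noteq> []" "length c = ?n" "hd c \<ge> last c" "last c \<ge> 1" "hd c \<ge> 1"
    if c: "c \<in> qzeta_index ?n" for c
  proof -
    show "length c = ?n" using c by (simp add: idx_iff)
    then show "c \<noteq> []" using npos by auto
    show "hd c \<ge> last c" using idx_hd[OF c n1] idx_last[OF c n1] idx_nth_le[OF c, of 0 "?n - 1"] npos by simp
    show "last c \<ge> 1" using idx_last[OF c n1] idx_pos[OF c, of "?n - 1"] npos by simp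
    show "hd c \<ge> 1" using idx_hd[OF c n1] idx_pos[OF c, of 0] npos by simp
  qed
  have hV: "(Vf q s j has_sum V) (qzeta_index (Suc ?n))"
    unfolding V_def using S_V[OF j] by (simp add: summable_iff_has_sum_infsum)
  have hV': "((\<lambda>(c, a). Vf q s j (a # c)) has_sum V) (Sigma (qzeta_index ?n) (\<lambda>c. {hd c<..}))"
    using has_sum_reindex_bij_betw[OF bij_first[OF n1], of "Vf q s j" V] hV
    by (simp add: case_prod_unfold)
  have inner: "((\<lambda>a. (\<lambda>(c, a). Vf q s j (a # c)) (c, a)) has_sum G c) {hd c<..}"
    if c: "c \<in> qzeta_index ?n" for c
  proof -
    note cf = cfacts[OF c]
    define b where "b = last c"
    define c' where "c' = butlast c"
    have cc: "c = c' @ [b]" using cf by (simp add: b_def c'_def)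
    have lc': "length c' = length ?mid" using cf cc by simp
    have WWc: "WW q ?mid c = WW q ?mid c'" unfolding cc by (rule WW_snoc) (simp add: lc')
    have eV: "Vf q s j (a # c) = w q 1 a * KK q a b * (WW q ?mid c * gg q (s ! j - 1) b)" for a
      using cf unfolding Vf_def WW_Cons b_def by simp
    have k2: "((\<lambda>a. w q 1 a * KK q a b) has_sum (w q 1 b * (\<Sum>b'<b. KK q (hd c) b'))) {hd c<..}"
      by (rule key2[OF q0 q1]) (use cf in \<open>auto simp: b_def\<close>)
    have sj: "Suc (s ! j - 1) = s ! j" using s_ge1[OF j] by simp
    have wb: "w q (s ! j) b = gg q (s ! j - 1) b / qint q (real b)"
      using w_gg[OF q0 q1, of "s ! j - 1" b] unfolding sj .
    have w1b: "w q (Suc 0) b = 1 / qint q (real b)" using w1[OF q0 q1, of b] by simp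
    have eG: "G c = w q 1 b * (\<Sum>b'<b. KK q (hd c) b') * (WW q ?mid c * gg q (s ! j - 1) b)"
      unfolding G_def rr b_def[symmetric] 
      by (subst (1) cc, subst WW_app1[OF lc'[symmetric]]) (simp add: WWc wb w1b)
    show ?thesis unfolding eG using has_sum_cmult_left[OF k2, of "WW q ?mid c * gg q (s ! j - 1) b"]
      by (simp add: eV)
  qed
  have hG: "(G has_sum V) (qzeta_index ?n)"
    by (rule has_sum_SigmaD[OF hV']) (rule inner)
  have GLH: "G c = Lf q s j' c + H c" if c: "c \<in> qzeta_index ?n" for c
  proof -
    note cf = cfacts[OF c]
    have s1: "(\<Sum>b'<last c. KK q (hd c) b') = KK q (hd c) 0 + (\<Sum>b'\<in>{0<..<last c}. KK q (hd c) b')"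
    proof -
      have "{..<last c} = insert 0 {0<..<last c}" using cf by auto
      then show ?thesis by simp
    qed
    have cc: "c = hd c # tl c" using cf by simp
    have "Lf q s j' c = w q (Suc (s ! j')) (hd c) * WW q (tl ?r) (tl c)"
      unfolding Lf_def by (subst cc) (simp add: WW_Cons)
    also have "\<dots> = w q (s ! j') (hd c) * WW q (tl ?r) (tl c) * KK q (hd c) 0"
      using w_KK0[OF q0 q1 s_ge1[OF j'n] cf(5)] by simp
    also have "\<dots> = WW q ?r c * KK q (hd c) 0"
      by (subst rr', subst cc) (simp add: WW_Cons)
    finally have "Lf q s j' c = WW q ?r c * KK q (hd c) 0" .
    then show ?thesis unfolding G_def H_def s1 by (simp add: algebra_simps sum_distrib_left)
  qed
  have hU: "(Uf q s j' has_sum U) (qzeta_index (Suc ?n))"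
    unfolding U_def using S_U by (simp add: summable_iff_has_sum_infsum)
  have hU': "((\<lambda>(c, b). Uf q s j' (c @ [b])) has_sum U) (Sigma (qzeta_index ?n) (\<lambda>c. {0<..<last c}))"
    using has_sum_reindex_bij_betw[OF bij_last[OF n1], of "Uf q s j'" U] hU
    by (simp add: case_prod_unfold)
  have innerU: "((\<lambda>b. (\<lambda>(c, b). Uf q s j' (c @ [b])) (c, b)) has_sum H c) {0<..<last c}"
    if c: "c \<in> qzeta_index ?n" for c
  proof -
    note cf = cfacts[OF c]
    have "Uf q s j' (c @ [b]) = WW q ?r c * KK q (hd c) b" for b
      unfolding Uf_def using cf by (simp add: WW_snoc)
    then show ?thesis unfolding H_def by (simp add: has_sum_finite)
  qed
  have hH: "(H has_sum U) (qzeta_index ?n)"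
    by (rule has_sum_SigmaD[OF hU']) (rule innerU)
  have hL: "(Lf q s j' has_sum L) (qzeta_index ?n)"
    unfolding L_def using S_L[OF j'n] by (simp add: summable_iff_has_sum_infsum)
  have "((\<lambda>c. Lf q s j' c + H c) has_sum (L + U)) (qzeta_index ?n)"
    by (rule has_sum_add[OF hL hH])
  then have "(G has_sum (L + U)) (qzeta_index ?n)"
    by (rule has_sum_cong[THEN iffD1, rotated]) (simp add: GLH)
  then have "V = L + U" using hG by (metis has_sum_unique)
  then show ?thesis unfolding V_def L_def U_def .
qed


lemma rot_sum: "(\<Sum>j<length s. f (Suc j mod length s)) = (\<Sum>j<length s. (f j :: real))"
proof -
  obtain m where m: "length s = Suc m" using npos by (cases "length s") auto
  have "(\<Sum>j<Suc m. f (Suc j mod Suc m)) = (\<Sum>j<m. f (Suc j mod Suc m)) + f 0" by simp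
  also have "(\<Sum>j<m. f (Suc j mod Suc m)) = (\<Sum>j<m. f (Suc j))" by (intro sum.cong) auto
  also have "\<dots> + f 0 = (\<Sum>j<Suc m. f j)" by (simp only: sum.lessThan_Suc_shift add.commute)
  finally show ?thesis unfolding m .
qed

lemma main_ctx:
  "(\<Sum>j<length s. qzeta q ((s ! j + 1) # tl (rotate j s)))
       = (\<Sum>j<length s. \<Sum>k<s ! j - 1. qzeta q ((s ! j - k) # tl (rotate j s) @ [k + 1]))"
proof -
  let ?n = "length s"
  let ?A = "qzeta_index (Suc ?n)"
  define L where "L j = infsum (Lf q s j) (qzeta_index ?n)" for j
  define U where "U j = infsum (Uf q s j) ?A" for j
  define V where "V j = infsum (Vf q s j) ?A" for j
  define R where "R j k = infsum (Rf q s j k) ?A" for j k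
  have eL: "qzeta q ((s ! j + 1) # tl (rotate j s)) = L j" for j
    unfolding L_def qzeta_WW Lf_def[abs_def] using npos by simp
  have eR: "qzeta q ((s ! j - k) # tl (rotate j s) @ [k + 1]) = R j k" for j k
    unfolding R_def qzeta_WW Rf_def[abs_def] using npos by simp
  have VUR: "V j = U j + (\<Sum>k<s ! j - 1. R j k)" if j: "j < ?n" for j
  proof -
    have h1: "(Uf q s j has_sum U j) ?A" unfolding U_def using S_U by (simp add: summable_iff_has_sum_infsum)
    have h2: "((\<lambda>ks. \<Sum>k<s ! j - 1. Rf q s j k ks) has_sum (\<Sum>k<s ! j - 1. R j k)) ?A"
    proof (rule has_sum_sum_fin)
      show "finite {..<s ! j - 1}" by simp
      fix k assume "k \<in> {..<s ! j - 1}"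
      then have "Rf q s j k summable_on ?A" using S_R[OF j] by simp
      then show "(Rf q s j k has_sum R j k) ?A" unfolding R_def by (simp add: summable_iff_has_sum_infsum)
    qed
    note h3 = has_sum_add[OF h1 h2]
    have "(Vf q s j has_sum (U j + (\<Sum>k<s ! j - 1. R j k))) ?A"
      using h3 by (rule has_sum_cong[THEN iffD1, rotated]) (simp add: P1[OF j])
    then show ?thesis unfolding V_def by (rule infsumI)
  qed
  have VLU: "V j = L (Suc j mod ?n) + U (Suc j mod ?n)" if j: "j < ?n" for j
    unfolding V_def L_def U_def by (rule P2[OF j])
  have "(\<Sum>j<?n. V j) = (\<Sum>j<?n. U j) + (\<Sum>j<?n. \<Sum>k<s ! j - 1. R j k)"
    by (simp add: VUR sum.distrib)
  moreover have "(\<Sum>j<?n. V j) = (\<Sum>j<?n. L j) + (\<Sum>j<?n. U j)"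
  proof -
    have "(\<Sum>j<?n. V j) = (\<Sum>j<?n. L (Suc j mod ?n) + U (Suc j mod ?n))" by (simp add: VLU)
    also have "\<dots> = (\<Sum>j<?n. L j + U j)" by (rule rot_sum)
    finally show ?thesis by (simp add: sum.distrib)
  qed
  ultimately have "(\<Sum>j<?n. L j) = (\<Sum>j<?n. \<Sum>k<s ! j - 1. R j k)" by simp
  then show ?thesis unfolding eL eR .
qed

end

theorem theorem5p1:
  fixes q :: real and s :: "nat list"
  assumes "0 < q" and "q < 1"
    and "length s > 0"
    and "\<forall>x\<in>set s. x > 0"
    and "\<exists>x\<in>set s. x > 1"
  shows "(\<Sum>j<length s. qzeta q ((s ! j + 1) # tl (rotate j s)))
       = (\<Sum>j<length s. \<Sum>k<s ! j - 1. qzeta q ((s ! j - k) # tl (rotate j s) @ [k + 1]))"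
  by (rule main_ctx[OF assms])

end
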